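(* Let $l\ge3$ be an integer and $x_1,\dots,x_l$ pairwise distinct real numbers, and set $a_{m,n}=\frac{1}{x_m-x_n}$ for $m\ne n$. Denoting by $\mathcal{S}_l$ the set of permutations of $\{1,\dots,l\}$, $$\sum_{\sigma\in\mathcal{S}_l} a_{\sigma(1),\sigma(2)}\,a_{\sigma(2),\sigma(3)}\cdots a_{\sigma(l-1),\sigma(l)}\,a_{\sigma(l),\sigma(1)}=0.$$ *)

theory Defs
  imports Complex_Main "HOL-Combinatorics.Permutations"
begin

end

theory Submission
  imports Defs
begin

definition aa :: "(nat \<Rightarrow> real) \<Rightarrow> nat \<Rightarrow> nat \<Rightarrow> real" where
  "aa x p q = 1 / (x p - x q)"

fun pathp :: "(nat \<Rightarrow> real) \<Rightarrow> nat list \<Rightarrow> real" where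
  "pathp x (u # v # r) = aa x u v * pathp x (v # r)"
| "pathp x _ = 1"

definition cyc :: "(nat \<Rightarrow> real) \<Rightarrow> nat list \<Rightarrow> real" where
  "cyc x xs = (\<Prod>i<length xs. aa x (xs ! i) (xs ! ((i + 1) mod length xs)))"

definition PL :: "nat set \<Rightarrow> nat list set" where
  "PL S = {xs. distinct xs \<and> set xs = S}"

lemma pathp_append: "pathp x (xs @ u # ys) = pathp x (xs @ [u]) * pathp x (u # ys)"
proof (induction xs)
  case Nil then show ?case by simp
next
  case (Cons w xs)
  then show ?case by (cases xs) auto
qed

lemma pathp_nth: "pathp x zs = (\<Prod>i < length zs - 1. aa x (zs ! i) (zs ! Suc i))"
proof (induction x zs rule: pathp.induct)
  case (1 x u v r)
  then show ?case by (simp del: prod.lessThan_Suc add: prod.lessThan_Suc_shift)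
qed auto

lemma cyc_pathp:
  assumes "xs \<noteq> []"
  shows "cyc x xs = pathp x (xs @ [hd xs])"
proof -
  have "pathp x (xs @ [hd xs]) = (\<Prod>i < length xs. aa x ((xs @ [hd xs]) ! i) ((xs @ [hd xs]) ! Suc i))"
    by (simp add: pathp_nth)
  also have "\<dots> = cyc x xs"
    unfolding cyc_def
  proof (rule prod.cong)
    fix i assume "i \<in> {..<length xs}"
    then have i: "i < length xs" by simp
    show "aa x ((xs @ [hd xs]) ! i) ((xs @ [hd xs]) ! Suc i) =
          aa x (xs ! i) (xs ! ((i + 1) mod length xs))"
    proof (cases "Suc i < length xs")
      case True then show ?thesis using i by (simp add: nth_append)
    next
      case False
      then have "Suc i = length xs" using i by simp
      then show ?thesis using i assms by (simp add: nth_append hd_conv_nth)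
    qed
  qed simp
  finally show ?thesis by simp
qed

lemma aa_anti: "aa x u v + aa x v u = 0"
  unfolding aa_def
  by (metis add.commute diff_minus_eq_add divide_minus_right minus_diff_eq right_minus)

lemma aa_three:
  assumes "x p \<noteq> x v" "x v \<noteq> x s" "x p \<noteq> x s"
  shows "aa x p v * aa x v s = (aa x p v + aa x v s) * aa x p s"
  using assms unfolding aa_def
  by (simp add: field_simps)


lemma sl: "sum_list (map f xs) = (\<Sum>k<length xs. f (xs ! k))"
  by (simp add: sum_list_sum_nth atLeast0LessThan)

lemma insertion_zero:
  assumes dys: "distinct ys" and len: "length ys \<ge> 2" and v: "v \<notin> set ys"
    and inj: "inj_on x (insert v (set ys))"
  shows "(\<Sum>j\<in>{1..length ys}. cyc x (take j ys @ v # drop j ys)) = 0"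
proof -
  obtain y0 r where ys: "ys = y0 # r" using len by (cases ys) auto
  define n where "n = length ys"
  have key: "cyc x (take j ys @ v # drop j ys) =
      (aa x (ys ! (j - 1)) v + aa x v ((ys @ [y0]) ! j)) * cyc x ys" if j: "j \<in> {1..n}" for j
  proof -
    define zs where "zs = ys @ [y0]"
    define p where "p = ys ! (j - 1)"
    define s where "s = zs ! j"
    define A where "A = take (j - 1) ys"
    define B where "B = drop (Suc j) zs"
    have j1: "j \<ge> 1" "j \<le> n" using j by auto
    have lz: "length zs = Suc n" by (simp add: zs_def n_def)
    have dz: "drop j zs = s # B"
      unfolding s_def B_def using j1 lz by (simp add: Cons_nth_drop_Suc)
    have e1: "zs = A @ p # s # B"
    proof -
      have "zs = take (j - 1) zs @ zs ! (j - 1) # drop (Suc (j - 1)) zs"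
        using j1 lz by (intro id_take_nth_drop) simp
      moreover have "take (j - 1) zs = A" using j1 by (simp add: zs_def A_def n_def)
      moreover have "zs ! (j - 1) = p" using j1 unfolding zs_def p_def n_def by (subst nth_append) auto
      moreover have "Suc (j - 1) = j" using j1 by simp
      ultimately show ?thesis using dz by simp
    qed
    have tk: "take j ys = A @ [p]"
    proof -
      have "take (Suc (j - 1)) ys = take (j - 1) ys @ [ys ! (j - 1)]"
        using j1 by (intro take_Suc_conv_app_nth) (simp add: n_def)
      then show ?thesis using j1 by (simp add: A_def p_def)
    qed
    have dr: "drop j ys @ [y0] = s # B"
      using dz j1 by (simp add: zs_def n_def)
    have e2: "(take j ys @ v # drop j ys) @ [y0] = A @ p # v # s # B"
      using tk dr by simp
    have hd: "hd (take j ys @ v # drop j ys) = y0"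
      using j1 ys by (cases j) auto
    have pin: "p \<in> set ys" using j1 by (simp add: p_def n_def)
    have sin: "s \<in> set ys"
    proof (cases "j < n")
      case True then show ?thesis by (simp add: s_def zs_def nth_append n_def)
    next
      case False then have "j = n" using j1 by simp
      then show ?thesis by (simp add: s_def zs_def nth_append n_def ys)
    qed
    have pns: "p \<noteq> s"
    proof (cases "j < n")
      case True
      then have "s = ys ! j" by (simp add: s_def zs_def nth_append n_def)
      then show ?thesis using True j1 dys by (simp add: p_def nth_eq_iff_index_eq n_def)
    next
      case False then have "j = n" using j1 by simp
      then have "s = ys ! 0" by (simp add: s_def zs_def nth_append n_def ys)
      moreover have "j - 1 \<noteq> 0" using \<open>j = n\<close> len n_def by simp
      moreover have "j - 1 < length ys" "0 < length ys" using j1 len n_def by auto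
      ultimately show ?thesis using dys unfolding p_def by (simp add: nth_eq_iff_index_eq)
    qed
    have xd: "x p \<noteq> x v" "x v \<noteq> x s" "x p \<noteq> x s"
      using inj pin sin pns v by (auto dest: inj_onD) (metis image_eqI)+
    have c1: "cyc x (take j ys @ v # drop j ys) = pathp x (A @ [p]) * (aa x p v * (aa x v s * pathp x (s # B)))"
      apply (subst cyc_pathp) apply simp
      apply (subst hd) apply (subst e2) apply (subst pathp_append) by simp
    have c2: "cyc x ys = pathp x (A @ [p]) * (aa x p s * pathp x (s # B))"
    proof -
      have "ys @ [hd ys] = A @ p # s # B" using e1 by (simp add: zs_def ys)
      then show ?thesis
        apply (subst cyc_pathp) apply (simp add: ys)
        apply (simp only:) apply (subst pathp_append) by simp
    qed
    show ?thesis
      unfolding c1 c2 p_def[symmetric] s_def[unfolded zs_def, symmetric]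
    proof -
      have "pathp x (A @ [p]) * (aa x p v * (aa x v s * pathp x (s # B))) =
            (aa x p v * aa x v s) * (pathp x (A @ [p]) * pathp x (s # B))" by (simp add: ac_simps)
      also have "\<dots> = (aa x p v + aa x v s) * (aa x p s * (pathp x (A @ [p]) * pathp x (s # B)))"
        unfolding aa_three[OF xd] by (simp add: ac_simps)
      finally show "pathp x (A @ [p]) * (aa x p v * (aa x v s * pathp x (s # B))) =
          (aa x p v + aa x v s) * (pathp x (A @ [p]) * (aa x p s * pathp x (s # B)))"
        by (simp add: ac_simps)
    qed
  qed
  have "(\<Sum>j\<in>{1..n}. cyc x (take j ys @ v # drop j ys)) =
        (\<Sum>j\<in>{1..n}. (aa x (ys ! (j - 1)) v + aa x v ((ys @ [y0]) ! j))) * cyc x ys"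
    by (simp add: key sum_distrib_right)
  also have "(\<Sum>j\<in>{1..n}. (aa x (ys ! (j - 1)) v + aa x v ((ys @ [y0]) ! j)))
      = (\<Sum>k<n. aa x (ys ! k) v + aa x v ((r @ [y0]) ! k))"
    using sum.atLeast1_atMost_eq[of "\<lambda>j. aa x (ys ! (j - 1)) v + aa x v ((ys @ [y0]) ! j)" n]
    by (simp add: ys)
  also have "\<dots> = sum_list (map (\<lambda>u. aa x u v) ys) + sum_list (map (\<lambda>u. aa x v u) (r @ [y0]))"
  proof -
    have ln: "length (r @ [y0]) = n" by (simp add: n_def ys)
    have h1: "sum_list (map (\<lambda>u. aa x u v) ys) = (\<Sum>k<n. aa x (ys!k) v)"
      by (simp only: sl n_def)
    have h2: "sum_list (map (\<lambda>u. aa x v u) (r @ [y0])) = (\<Sum>k<n. aa x v ((r @ [y0])!k))"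
      using sl[of "\<lambda>u. aa x v u" "r @ [y0]"] ln by (simp only:)
    show ?thesis unfolding h1 h2 by (simp add: sum.distrib)
  qed
  also have "sum_list (map (\<lambda>u. aa x v u) (r @ [y0])) = sum_list (map (\<lambda>u. aa x v u) ys)"
    by (simp add: ys add.commute)
  also have "sum_list (map (\<lambda>u. aa x u v) ys) + sum_list (map (\<lambda>u. aa x v u) ys) = 0"
    by (simp add: sum_list_addf[symmetric] aa_anti)
  finally show ?thesis by (simp add: n_def)
qed


lemma finite_PL: "finite S \<Longrightarrow> finite (PL S)"
  by (rule finite_subset[OF _ finite_lists_length_eq[of S "card S"]])
     (auto simp: PL_def distinct_card)

lemma fiber_eq:
  assumes ys: "ys \<in> PL (S - {v})" and vS: "v \<in> S"
  shows "{xs \<in> {xs \<in> PL S. hd xs \<noteq> v}. remove1 v xs = ys} =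
         (\<lambda>j. take j ys @ v # drop j ys) ` {1..length ys}"
proof (intro equalityI subsetI)
  fix xs assume "xs \<in> {xs \<in> {xs \<in> PL S. hd xs \<noteq> v}. remove1 v xs = ys}"
  then have d: "distinct xs" "set xs = S" "hd xs \<noteq> v" "remove1 v xs = ys"
    by (auto simp: PL_def)
  then have "v \<in> set xs" using vS by simp
  then obtain us ws where xs: "xs = us @ v # ws" "v \<notin> set us"
    using split_list_first by metis
  have yss: "ys = us @ ws" using d(4) xs by (simp add: remove1_append remove1_idem)
  have "us \<noteq> []" using d(3) xs by auto
  then have "length us \<in> {1..length ys}" using yss by (cases us) auto
  moreover have "xs = take (length us) ys @ v # drop (length us) ys" using yss xs by simp
  ultimately show "xs \<in> (\<lambda>j. take j ys @ v # drop j ys) ` {1..length ys}" by blast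
next
  fix xs assume "xs \<in> (\<lambda>j. take j ys @ v # drop j ys) ` {1..length ys}"
  then obtain j where j: "j \<in> {1..length ys}" and xs: "xs = take j ys @ v # drop j ys" by blast
  have ys': "distinct ys" "set ys = S - {v}" using ys by (auto simp: PL_def)
  have vt: "v \<notin> set (take j ys)" "v \<notin> set (drop j ys)"
    using ys' set_take_subset set_drop_subset by fastforce+
  have dtd: "distinct (take j ys @ drop j ys)" using ys' by simp
  then have "distinct xs" using vt xs by (simp del: append_take_drop_id)
  moreover have "set xs = S"
  proof -
    have "set xs = set (take j ys) \<union> set (drop j ys) \<union> {v}" using xs by auto
    also have "set (take j ys) \<union> set (drop j ys) = set ys" by (metis set_append append_take_drop_id)
    also have "set ys \<union> {v} = S" using ys' vS by auto
    finally show ?thesis .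
  qed
  moreover have "hd xs \<noteq> v"
  proof -
    have "take j ys \<noteq> []" using j by (cases ys) auto
    then have "hd xs \<in> set (take j ys)" using xs by (cases "take j ys") auto
    then show ?thesis using vt by auto
  qed
  moreover have "remove1 v xs = ys" using xs vt by (simp add: remove1_append)
  ultimately show "xs \<in> {xs \<in> {xs \<in> PL S. hd xs \<noteq> v}. remove1 v xs = ys}"
    by (simp add: PL_def)
qed

lemma fiber_inj:
  assumes "v \<notin> set ys"
  shows "inj_on (\<lambda>j. take j ys @ v # drop j ys) {1..length ys}"
proof (rule inj_onI)
  fix i j assume i: "i \<in> {1..length ys}" and j: "j \<in> {1..length ys}"
    and e: "take i ys @ v # drop i ys = take j ys @ v # drop j ys"
  have vt: "\<And>k. v \<notin> set (take k ys)" using assms set_take_subset by fastforce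
  have "takeWhile (\<lambda>z. z \<noteq> v) (take i ys @ v # drop i ys) = take i ys"
    using vt[of i] by (subst takeWhile_append2) auto
  moreover have "takeWhile (\<lambda>z. z \<noteq> v) (take j ys @ v # drop j ys) = take j ys"
    using vt[of j] by (subst takeWhile_append2) auto
  ultimately have "take i ys = take j ys" using e by simp
  then have "length (take i ys) = length (take j ys)" by simp
  then show "i = j" using i j by simp
qed

lemma not_head_zero:
  assumes fin: "finite S" and vS: "v \<in> S" and c: "card S \<ge> 3" and inj: "inj_on x S"
  shows "(\<Sum>xs\<in>{xs \<in> PL S. hd xs \<noteq> v}. cyc x xs) = 0"
proof -
  let ?F = "{xs \<in> PL S. hd xs \<noteq> v}"
  let ?Q = "PL (S - {v})"
  have fF: "finite ?F" using finite_PL[OF fin] by simp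
  have fQ: "finite ?Q" using finite_PL fin by simp
  have im: "remove1 v ` ?F \<subseteq> ?Q" by (auto simp: PL_def)
  have "(\<Sum>xs\<in>?F. cyc x xs) = (\<Sum>ys\<in>?Q. \<Sum>xs\<in>{xs \<in> ?F. remove1 v xs = ys}. cyc x xs)"
    using sum.group[OF fF fQ im, of "cyc x"] by simp
  also have "\<dots> = 0"
  proof (rule sum.neutral, rule ballI)
    fix ys assume ys: "ys \<in> ?Q"
    have ys': "distinct ys" "set ys = S - {v}" using ys by (auto simp: PL_def)
    have vn: "v \<notin> set ys" using ys' by simp
    have len: "length ys \<ge> 2"
    proof -
      have "length ys = card (S - {v})" using ys' distinct_card by metis
      also have "\<dots> = card S - 1" using vS fin by simp
      finally show ?thesis using c by simp
    qed
    have injv: "inj_on x (insert v (set ys))" using inj ys' vS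
      by (metis insert_Diff inj_on_subset subsetI)
    have "(\<Sum>xs\<in>{xs \<in> ?F. remove1 v xs = ys}. cyc x xs) =
          (\<Sum>xs\<in>(\<lambda>j. take j ys @ v # drop j ys) ` {1..length ys}. cyc x xs)"
      using fiber_eq[OF ys vS] by simp
    also have "\<dots> = (\<Sum>j\<in>{1..length ys}. cyc x (take j ys @ v # drop j ys))"
      by (rule sum.reindex[OF fiber_inj[OF vn], unfolded comp_def])
    also have "\<dots> = 0" by (rule insertion_zero[OF ys'(1) len vn injv])
    finally show "(\<Sum>xs\<in>{xs \<in> ?F. remove1 v xs = ys}. cyc x xs) = 0" .
  qed
  finally show ?thesis .
qed

lemma total_zero:
  assumes fin: "finite S" and c: "card S \<ge> 3" and inj: "inj_on x S"
  shows "(\<Sum>xs\<in>PL S. cyc x xs) = 0"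
proof -
  let ?T = "\<Sum>xs\<in>PL S. cyc x xs"
  have fP: "finite (PL S)" using finite_PL[OF fin] .
  have ne: "S \<noteq> {}" using c by auto
  have im: "hd ` PL S \<subseteq> S"
  proof
    fix y assume "y \<in> hd ` PL S"
    then obtain xs where "xs \<in> PL S" "y = hd xs" by blast
    then show "y \<in> S" using ne by (cases xs) (auto simp: PL_def)
  qed
  have each: "(\<Sum>xs\<in>{xs \<in> PL S. hd xs = v}. cyc x xs) = ?T" if vS: "v \<in> S" for v
  proof -
    have "PL S = {xs \<in> PL S. hd xs = v} \<union> {xs \<in> PL S. hd xs \<noteq> v}" by auto
    then have "?T = (\<Sum>xs\<in>{xs \<in> PL S. hd xs = v}. cyc x xs) + (\<Sum>xs\<in>{xs \<in> PL S. hd xs \<noteq> v}. cyc x xs)"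
      using fP by (metis (no_types, lifting) sum.union_disjoint finite_Un disjoint_iff mem_Collect_eq)
    then show ?thesis using not_head_zero[OF fin vS c inj] by simp
  qed
  have "?T = (\<Sum>v\<in>S. \<Sum>xs\<in>{xs \<in> PL S. hd xs = v}. cyc x xs)"
    using sum.group[OF fP fin im, of "cyc x"] by simp
  also have "\<dots> = (\<Sum>v\<in>S. ?T)" using each by simp
  also have "\<dots> = real (card S) * ?T" by simp
  finally have "(real (card S) - 1) * ?T = 0" by (simp add: algebra_simps)
  moreover have "real (card S) - 1 \<noteq> 0" using c by simp
  ultimately show ?thesis by simp
qed


lemma perm_list_bij:
  "bij_betw (\<lambda>\<sigma>. map \<sigma> [1..<Suc l]) {\<sigma>. \<sigma> permutes {1..l}} (PL {1..l})"
proof (rule bij_betw_imageI)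
  show "inj_on (\<lambda>\<sigma>. map \<sigma> [1..<Suc l]) {\<sigma>. \<sigma> permutes {1..l}}"
  proof (rule inj_onI)
    fix \<sigma> \<tau> assume s: "\<sigma> \<in> {\<sigma>. \<sigma> permutes {1..l}}" and t: "\<tau> \<in> {\<sigma>. \<sigma> permutes {1..l}}"
      and e: "map \<sigma> [1..<Suc l] = map \<tau> [1..<Suc l]"
    show "\<sigma> = \<tau>"
    proof
      fix i show "\<sigma> i = \<tau> i"
      proof (cases "i \<in> {1..l}")
        case True then show ?thesis using e by (auto simp: map_eq_conv)
      next
        case False then show ?thesis using s t by (simp add: permutes_not_in)
      qed
    qed
  qed
  show "(\<lambda>\<sigma>. map \<sigma> [1..<Suc l]) ` {\<sigma>. \<sigma> permutes {1..l}} = PL {1..l}"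
  proof (intro equalityI subsetI)
    fix xs assume "xs \<in> (\<lambda>\<sigma>. map \<sigma> [1..<Suc l]) ` {\<sigma>. \<sigma> permutes {1..l}}"
    then obtain \<sigma> where s: "\<sigma> permutes {1..l}" and xs: "xs = map \<sigma> [1..<Suc l]" by blast
    have "distinct xs" using xs permutes_inj_on[OF s] by (simp add: distinct_map)
    moreover have "set xs = {1..l}"
    proof -
      have "set [1..<Suc l] = {1..l}" by auto
      then show ?thesis using xs permutes_image[OF s] by (simp only: set_map)
    qed
    ultimately show "xs \<in> PL {1..l}" by (simp add: PL_def)
  next
    fix xs assume "xs \<in> PL {1..l}"
    then have d: "distinct xs" "set xs = {1..l}" by (auto simp: PL_def)
    have len: "length xs = l" using distinct_card[OF d(1)] d(2) by simp
    define \<sigma> where "\<sigma> i = (if i \<in> {1..l} then xs ! (i - 1) else i)" for i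
    have inj: "inj_on \<sigma> {1..l}"
    proof (rule inj_onI)
      fix i j assume i: "i \<in> {1..l}" and j: "j \<in> {1..l}" and e: "\<sigma> i = \<sigma> j"
      then have "xs ! (i - 1) = xs ! (j - 1)" by (simp add: \<sigma>_def)
      moreover have "i - 1 < length xs" "j - 1 < length xs" using i j len by auto
      ultimately have "i - 1 = j - 1" using d(1) by (simp add: nth_eq_iff_index_eq)
      then show "i = j" using i j by auto
    qed
    have sub: "\<sigma> ` {1..l} \<subseteq> {1..l}"
    proof
      fix y assume "y \<in> \<sigma> ` {1..l}"
      then obtain i where i: "i \<in> {1..l}" "y = xs ! (i - 1)" by (auto simp: \<sigma>_def)
      then have "y \<in> set xs" using len by auto
      then show "y \<in> {1..l}" using d(2) by simp
    qed
    have "\<sigma> permutes {1..l}"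
    proof (rule bij_imp_permutes)
      show "bij_betw \<sigma> {1..l} {1..l}" unfolding bij_betw_def
        using inj endo_inj_surj[OF _ sub inj] by simp
      show "\<And>i. i \<notin> {1..l} \<Longrightarrow> \<sigma> i = i" by (auto simp: \<sigma>_def)
    qed
    moreover have "map \<sigma> [1..<Suc l] = xs"
      by (rule nth_equalityI) (auto simp: len \<sigma>_def nth_upt simp del: upt_Suc)
    ultimately show "xs \<in> (\<lambda>\<sigma>. map \<sigma> [1..<Suc l]) ` {\<sigma>. \<sigma> permutes {1..l}}" by blast
  qed
qed

lemma prod_as_cyc:
  assumes "l \<ge> 1"
  shows "(\<Prod>i = 1..l. 1 / (x (\<sigma> i) - x (\<sigma> (if i = l then 1 else i + 1)))) =
         cyc x (map \<sigma> [1..<Suc l])"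
proof -
  have "(\<Prod>i = 1..l. 1 / (x (\<sigma> i) - x (\<sigma> (if i = l then 1 else i + 1)))) =
        (\<Prod>k<l. 1 / (x (\<sigma> (Suc k)) - x (\<sigma> (if Suc k = l then 1 else Suc k + 1))))"
    using prod.atLeast1_atMost_eq[of "\<lambda>i. 1 / (x (\<sigma> i) - x (\<sigma> (if i = l then 1 else i + 1)))" l]
    by simp
  also have "\<dots> = cyc x (map \<sigma> [1..<Suc l])"
    unfolding cyc_def
  proof (rule prod.cong)
    fix k assume "k \<in> {..<length (map \<sigma> [1..<Suc l])}"
    then have k: "k < l" by (simp del: upt_Suc)
    show "1 / (x (\<sigma> (Suc k)) - x (\<sigma> (if Suc k = l then 1 else Suc k + 1))) =
      aa x (map \<sigma> [1..<Suc l] ! k) (map \<sigma> [1..<Suc l] ! ((k + 1) mod length (map \<sigma> [1..<Suc l])))"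
    proof (cases "Suc k = l")
      case True then show ?thesis using k by (simp add: aa_def del: upt_Suc)
    next
      case False then have "Suc k < l" using k by simp
      then show ?thesis using k False by (simp add: aa_def del: upt_Suc)
    qed
  qed simp
  finally show ?thesis .
qed

theorem lemma4:
  fixes l :: nat and x :: "nat \<Rightarrow> real"
  assumes "l \<ge> 3"
    and "inj_on x {1..l}"
  shows "(\<Sum>\<sigma> | \<sigma> permutes {1..l}.
           \<Prod>i = 1..l. 1 / (x (\<sigma> i) - x (\<sigma> (if i = l then 1 else i + 1)))) = 0"
proof -
  have "(\<Sum>\<sigma> | \<sigma> permutes {1..l}.
           \<Prod>i = 1..l. 1 / (x (\<sigma> i) - x (\<sigma> (if i = l then 1 else i + 1)))) =
        (\<Sum>\<sigma> | \<sigma> permutes {1..l}. cyc x (map \<sigma> [1..<Suc l]))"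
    using assms(1) by (intro sum.cong refl prod_as_cyc) simp
  also have "\<dots> = (\<Sum>xs\<in>PL {1..l}. cyc x xs)"
    by (rule sum.reindex_bij_betw[OF perm_list_bij])
  also have "\<dots> = 0" using assms by (intro total_zero) auto
  finally show ?thesis .
qed

end
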